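(* For $c\in(0,\tfrac12]$ and a path $\xi=x_1x_2\cdots\in\Omega$ put \[ K^{(c)}_n(\xi):=\prod_{j=2}^{n}\bigl(1-c\,\overline{x}_{j-1}x_j\bigr)\qquad(K^{(c)}_0=K^{(c)}_1=1). \] This is the capital of the multiplicative contrarian strategy $\mathcal{P}_c$: $M_n=-c\,\overline{x}_{n-1}\mathcal{K}_{n-1}$ with initial capital $1$. Let Skeptic follow the mixture $\mathcal{Q}=\sum_{i\ge1}2^{-i}\mathcal{P}_{2^{-i}}$ with initial capital $1$. His capital is then \[ \mathcal{K}_n=\sum_{i\ge1}2^{-i}K^{(2^{-i})}_n . \] Then $\mathcal{K}_n(\xi)\ge 0$ for all $\xi\in\Omega$ and all $n$. Moreover $\mathcal{K}_n(\xi)\to\infty$ as $n\to\infty$ for every path $\xi\notin E_1$, where \[ E_1:=\{\xi:\ \limsup_{n\to\infty}\sqrt n\,|\overline{x}_n|\ge 1\}. \] Equivalently, Skeptic can force $E_1$ by $\mathcal{Q}$.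
   Context: Fair-coin game: the initial capital is $\mathcal{K}_0$. In rounds $n=1,2,\dots$ Skeptic announces $M_n\in\mathbb{R}$, then Reality announces $x_n\in\{-1,1\}$, and $\mathcal{K}_n:=\mathcal{K}_{n-1}+M_nx_n$. Skeptic's move may depend only on $x_1,\dots,x_{n-1}$. A path is an infinite sequence $\xi=x_1x_2\cdots\in\{-1,1\}^{\mathbb{N}}$, and $\Omega$ is the set of paths. We write $s_n:=x_1+\cdots+x_n$ and $\overline{x}_n:=s_n/n$, with $s_0=\overline{x}_0=0$. A strategy $\mathcal{P}$ assigns a real number to each finite sequence (situation). Its capital process with zero initial capital is $\mathcal{K}^{\mathcal{P}}_n(\xi)=\sum_{k=1}^n\mathcal{P}(x_1\cdots x_{k-1})x_k$. Skeptic forces an event $E\subseteq\Omega$ if there is a strategy $\mathcal{P}$ such that $\mathcal{K}^{\mathcal{P}}_n(\xi)\ge-1$ for all $\xi\in\Omega$ and all $n\ge0$, and $\lim_n\mathcal{K}^{\mathcal{P}}_n(\xi)=\infty$ for all $\xi\notin E$. Equivalently, the capital started from $1$ stays nonnegative and tends to infinity off $E$. *)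

theory Defs
  imports Complex_Main "HOL-Library.Liminf_Limsup" "HOL-Library.Extended_Real"
begin

text \<open>A path is \<open>\<xi> :: nat \<Rightarrow> real\<close>; the moves are \<open>x_n = \<xi> n\<close> for \<open>n \<ge> 1\<close>
  (the value \<open>\<xi> 0\<close> is irrelevant and never used).\<close>

definition Omega :: "(nat \<Rightarrow> real) set" where
  "Omega = {\<xi>. \<forall>n\<ge>1. \<xi> n \<in> {-1, 1}}"

text \<open>\<open>xbar \<xi> n = s_n / n\<close>, with \<open>xbar \<xi> 0 = 0\<close> (division by zero is 0).\<close>
definition xbar :: "(nat \<Rightarrow> real) \<Rightarrow> nat \<Rightarrow> real" where
  "xbar \<xi> n = (\<Sum>k=1..n. \<xi> k) / real n"

definition Kc :: "real \<Rightarrow> (nat \<Rightarrow> real) \<Rightarrow> nat \<Rightarrow> real" where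
  "Kc c \<xi> n = (\<Prod>j=2..n. (1 - c * xbar \<xi> (j - 1) * \<xi> j))"

definition Kmix :: "(nat \<Rightarrow> real) \<Rightarrow> nat \<Rightarrow> real" where
  "Kmix \<xi> n = (\<Sum>i. (1/2) ^ Suc i * Kc ((1/2) ^ Suc i) \<xi> n)"

definition E1 :: "(nat \<Rightarrow> real) set" where
  "E1 = {\<xi> \<in> Omega. limsup (\<lambda>n. ereal (sqrt (real n) * \<bar>xbar \<xi> n\<bar>)) \<ge> 1}"

text \<open>Situations are finite lists \<open>[x_1, ..., x_m]\<close>; a strategy maps situations to moves.\<close>
definition capital :: "(real list \<Rightarrow> real) \<Rightarrow> (nat \<Rightarrow> real) \<Rightarrow> nat \<Rightarrow> real" where
  "capital P \<xi> n = (\<Sum>k=1..n. P (map \<xi> [1..<k]) * \<xi> k)"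

definition forces :: "(real list \<Rightarrow> real) \<Rightarrow> (nat \<Rightarrow> real) set \<Rightarrow> bool" where
  "forces P E \<longleftrightarrow> (\<forall>\<xi>\<in>Omega. \<forall>n. capital P \<xi> n \<ge> -1) \<and>
     (\<forall>\<xi>\<in>Omega. \<xi> \<notin> E \<longrightarrow> filterlim (capital P \<xi>) at_top sequentially)"

text \<open>List versions: mean of a situation and the capital \<open>K^{(c)}_m\<close> after situation
  \<open>[x_1,...,x_m]\<close>.\<close>
definition mean :: "real list \<Rightarrow> real" where
  "mean s = sum_list s / real (length s)"

definition Kl :: "real \<Rightarrow> real list \<Rightarrow> real" where
  "Kl c s = (\<Prod>j\<in>{1..<length s}. (1 - c * mean (take j s) * s ! j))"

definition Pc :: "real \<Rightarrow> real list \<Rightarrow> real" where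
  "Pc c s = - c * mean s * Kl c s"

definition Q :: "real list \<Rightarrow> real" where
  "Q s = (\<Sum>i. (1/2) ^ Suc i * Pc ((1/2) ^ Suc i) s)"

end

theory Submission
  imports Defs
begin

lemma Omega_abs: "\<xi> \<in> Omega \<Longrightarrow> n \<ge> 1 \<Longrightarrow> \<bar>\<xi> n\<bar> = 1"
  by (auto simp: Omega_def)

lemma Omega_sq: "\<xi> \<in> Omega \<Longrightarrow> n \<ge> 1 \<Longrightarrow> (\<xi> n)^2 = 1"
  by (auto simp: Omega_def)

lemma xbar_abs: assumes "\<xi> \<in> Omega" shows "\<bar>xbar \<xi> n\<bar> \<le> 1"
proof (cases "n = 0")
  case True thus ?thesis by (simp add: xbar_def)
next
  case False
  have "\<bar>\<Sum>k=1..n. \<xi> k\<bar> \<le> (\<Sum>k=1..n. \<bar>\<xi> k\<bar>)" by (rule sum_abs)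
  also have "(\<Sum>k=1..n. \<bar>\<xi> k\<bar>) = (\<Sum>k=1..n. 1)"
    by (rule sum.cong) (auto simp: Omega_abs[OF assms])
  finally have "\<bar>\<Sum>k=1..n. \<xi> k\<bar> \<le> real n" by simp
  thus ?thesis using False by (simp add: xbar_def abs_divide)
qed

lemma Kc_Suc: "Kc c \<xi> (Suc m) = Kc c \<xi> m * (1 - c * xbar \<xi> m * \<xi> (Suc m))"
proof (cases "m = 0")
  case True thus ?thesis by (simp add: Kc_def xbar_def)
next
  case False
  hence "{2..Suc m} = insert (Suc m) {2..m}" by auto
  thus ?thesis by (simp add: Kc_def mult.commute)
qed

lemma factor_bounds: assumes "\<xi> \<in> Omega" "0 \<le> c" "c \<le> 1/2"
  shows "1/2 \<le> 1 - c * xbar \<xi> m * \<xi> (Suc m)" "1 - c * xbar \<xi> m * \<xi> (Suc m) \<le> 2"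
proof -
  have "\<bar>c * xbar \<xi> m * \<xi> (Suc m)\<bar> = c * \<bar>xbar \<xi> m\<bar>"
    using Omega_abs[OF assms(1), of "Suc m"] assms(2) by (simp add: abs_mult)
  also have "\<dots> \<le> c" using xbar_abs[OF assms(1)] assms(2) by (simp add: mult_left_le)
  finally show "1/2 \<le> 1 - c * xbar \<xi> m * \<xi> (Suc m)" "1 - c * xbar \<xi> m * \<xi> (Suc m) \<le> 2"
    using assms by linarith+
qed

lemma Kc_bounds: assumes "\<xi> \<in> Omega" "0 \<le> c" "c \<le> 1/2"
  shows "0 < Kc c \<xi> n \<and> Kc c \<xi> n \<le> 2^n"
proof (induction n)
  case 0 thus ?case by (simp add: Kc_def)
next
  case (Suc n)
  have f: "1/2 \<le> 1 - c * xbar \<xi> n * \<xi> (Suc n)" "1 - c * xbar \<xi> n * \<xi> (Suc n) \<le> 2"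
    using factor_bounds[OF assms] by auto
  have "Kc c \<xi> n * (1 - c * xbar \<xi> n * \<xi> (Suc n)) \<le> 2^n * 2"
    using Suc f by (intro mult_mono) auto
  moreover have "0 < Kc c \<xi> n * (1 - c * xbar \<xi> n * \<xi> (Suc n))"
    using Suc f by (intro mult_pos_pos) auto
  ultimately show ?case by (simp add: Kc_Suc mult.commute)
qed

lemma w_bounds: "0 < (1/2::real)^Suc i" "(1/2::real)^Suc i \<le> 1/2"
proof -
  show "0 < (1/2::real)^Suc i" by simp
  have "(1/2::real)^i \<le> 1" by (rule power_le_one) auto
  thus "(1/2::real)^Suc i \<le> 1/2" by simp
qed

lemma summable_geo_bound: fixes f :: "nat \<Rightarrow> real"
  assumes "\<And>i. \<bar>f i\<bar> \<le> C * (1/2)^Suc i" shows "summable f"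
proof (rule summable_comparison_test)
  show "\<exists>N. \<forall>n\<ge>N. norm (f n) \<le> C * (1/2)^Suc n" using assms by auto
  show "summable (\<lambda>n. C * (1/2::real)^Suc n)"
    using power_half_series sums_summable summable_mult by blast
qed

lemma mean_map: "mean (map \<xi> [1..<Suc m]) = xbar \<xi> m"
  by (simp add: mean_def xbar_def sum_set_upt_conv_sum_list_nat[symmetric] atLeastLessThanSuc_atLeastAtMost del: upt_Suc)

lemma Kc_alt: "Kc c \<xi> m = (\<Prod>j\<in>{1..<m}. (1 - c * xbar \<xi> j * \<xi> (Suc j)))"
proof (induction m)
  case 0 thus ?case by (simp add: Kc_def)
next
  case (Suc m)
  show ?case
  proof (cases "m = 0")
    case True thus ?thesis by (simp add: Kc_def)
  next
    case False
    hence "(\<Prod>j\<in>{1..<Suc m}. (1 - c * xbar \<xi> j * \<xi> (Suc j))) =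
       (\<Prod>j\<in>{1..<m}. (1 - c * xbar \<xi> j * \<xi> (Suc j))) * (1 - c * xbar \<xi> m * \<xi> (Suc m))"
      by (simp add: prod.atLeastLessThan_Suc)
    thus ?thesis using Suc by (simp add: Kc_Suc)
  qed
qed

lemma Kl_map: "Kl c (map \<xi> [1..<Suc m]) = Kc c \<xi> m"
  unfolding Kl_def Kc_alt
proof (rule prod.cong)
  show "{1..<length (map \<xi> [1..<Suc m])} = {1..<m}" by simp
next
  fix j assume "j \<in> {1..<m}"
  hence j: "j < m" by simp
  have "take j (map \<xi> [1..<Suc m]) = map \<xi> [1..<Suc j]" using j by (simp add: take_map)
  moreover have "map \<xi> [1..<Suc m] ! j = \<xi> (Suc j)" using j by (simp del: upt_Suc)
  ultimately show "1 - c * mean (take j (map \<xi> [1..<Suc m])) * map \<xi> [1..<Suc m] ! j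
      = 1 - c * xbar \<xi> j * \<xi> (Suc j)" by (simp only: mean_map)
qed

lemma Pc_map: "Pc c (map \<xi> [1..<Suc m]) = - c * xbar \<xi> m * Kc c \<xi> m"
  unfolding Pc_def Kl_map mean_map by simp

lemma Kc_telescope: "Kc c \<xi> n - 1 = (\<Sum>k=1..n. Pc c (map \<xi> [1..<k]) * \<xi> k)"
proof (induction n)
  case 0 thus ?case by (simp add: Kc_def)
next
  case (Suc n)
  have "(\<Sum>k=1..Suc n. Pc c (map \<xi> [1..<k]) * \<xi> k) =
     (\<Sum>k=1..n. Pc c (map \<xi> [1..<k]) * \<xi> k) + Pc c (map \<xi> [1..<Suc n]) * \<xi> (Suc n)"
    by simp
  also have "\<dots> = Kc c \<xi> n - 1 + (- c * xbar \<xi> n * Kc c \<xi> n) * \<xi> (Suc n)"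
    by (simp only: Pc_map Suc.IH[symmetric])
  also have "\<dots> = Kc c \<xi> (Suc n) - 1" by (simp add: Kc_Suc algebra_simps)
  finally show ?case by simp
qed


lemma summable_Kmix: assumes "\<xi> \<in> Omega"
  shows "summable (\<lambda>i. (1/2::real) ^ Suc i * Kc ((1/2) ^ Suc i) \<xi> n)"
proof (rule summable_geo_bound[where C="2^n"])
  fix i
  have "0 < Kc ((1/2) ^ Suc i) \<xi> n \<and> Kc ((1/2) ^ Suc i) \<xi> n \<le> 2^n"
    using Kc_bounds[OF assms] w_bounds[of i] by auto
  thus "\<bar>(1/2::real) ^ Suc i * Kc ((1/2) ^ Suc i) \<xi> n\<bar> \<le> 2^n * (1/2)^Suc i"
    by (simp add: abs_mult)
qed

lemma summable_Q: assumes "\<xi> \<in> Omega"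
  shows "summable (\<lambda>i. (1/2::real) ^ Suc i * Pc ((1/2) ^ Suc i) (map \<xi> [1..<Suc m]) * y)"
proof (rule summable_geo_bound[where C="2^m * \<bar>y\<bar>"])
  fix i
  define c where "c = (1/2::real) ^ Suc i"
  have c: "0 < c" "c \<le> 1/2" using w_bounds[of i] by (auto simp: c_def)
  have K: "0 < Kc c \<xi> m \<and> Kc c \<xi> m \<le> 2^m"
    using Kc_bounds[OF assms] c by auto
  have "\<bar>Pc c (map \<xi> [1..<Suc m])\<bar> = c * \<bar>xbar \<xi> m\<bar> * Kc c \<xi> m"
    unfolding Pc_map using c K by (simp add: abs_mult)
  also have "\<dots> \<le> 1 * 1 * 2^m"
    using c K xbar_abs[OF assms, of m] by (intro mult_mono) auto
  finally have "\<bar>Pc c (map \<xi> [1..<Suc m])\<bar> \<le> 2^m" by simp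
  hence "\<bar>Pc c (map \<xi> [1..<Suc m])\<bar> * \<bar>y\<bar> \<le> 2^m * \<bar>y\<bar>" by (rule mult_right_mono) simp
  hence "c * (\<bar>Pc c (map \<xi> [1..<Suc m])\<bar> * \<bar>y\<bar>) \<le> c * (2^m * \<bar>y\<bar>)"
    using c by (intro mult_left_mono) auto
  thus "\<bar>(1/2::real) ^ Suc i * Pc ((1/2) ^ Suc i) (map \<xi> [1..<Suc m]) * y\<bar> \<le> 2^m * \<bar>y\<bar> * (1/2)^Suc i"
    using c unfolding c_def[symmetric] by (simp add: abs_mult mult.commute mult.left_commute del: upt_Suc)
qed

lemma main_identity: assumes "\<xi> \<in> Omega" shows "Kmix \<xi> n = 1 + capital Q \<xi> n"
proof -
  define w where "w i = (1/2::real)^Suc i" for i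
  have sw: "summable w" "suminf w = 1"
    using power_half_series unfolding w_def by (auto simp: sums_iff)
  have sK: "summable (\<lambda>i. w i * Kc (w i) \<xi> n)"
    using summable_Kmix[OF assms] unfolding w_def .
  have sQy: "summable (\<lambda>i. w i * Pc (w i) (map \<xi> [1..<k]) * y)" if "k \<in> {1..n}" for k y
  proof -
    define m where "m = k - 1"
    have "k = Suc m" using that by (auto simp: m_def)
    thus ?thesis using summable_Q[OF assms, of m y] unfolding w_def by simp
  qed
  have sQ: "summable (\<lambda>i. w i * Pc (w i) (map \<xi> [1..<k]) * \<xi> k)" if "k \<in> {1..n}" for k
    using sQy[OF that] .
  have "capital Q \<xi> n = (\<Sum>k=1..n. (\<Sum>i. w i * Pc (w i) (map \<xi> [1..<k])) * \<xi> k)"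
    unfolding capital_def Q_def w_def ..
  also have "\<dots> = (\<Sum>k=1..n. \<Sum>i. w i * Pc (w i) (map \<xi> [1..<k]) * \<xi> k)"
  proof (rule sum.cong[OF refl])
    fix k assume k: "k \<in> {1..n}"
    have "summable (\<lambda>i. w i * Pc (w i) (map \<xi> [1..<k]))"
      using sQy[OF k, of 1] by simp
    thus "(\<Sum>i. w i * Pc (w i) (map \<xi> [1..<k])) * \<xi> k = (\<Sum>i. w i * Pc (w i) (map \<xi> [1..<k]) * \<xi> k)"
      by (rule suminf_mult2)
  qed
  also have "\<dots> = (\<Sum>i. \<Sum>k=1..n. w i * Pc (w i) (map \<xi> [1..<k]) * \<xi> k)"
    by (rule suminf_sum[symmetric]) (rule sQ)
  also have "\<dots> = (\<Sum>i. w i * Kc (w i) \<xi> n - w i)"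
  proof (rule suminf_cong)
    fix i
    show "(\<Sum>k=1..n. w i * Pc (w i) (map \<xi> [1..<k]) * \<xi> k) = w i * Kc (w i) \<xi> n - w i"
    proof -
      have "(\<Sum>k=1..n. w i * Pc (w i) (map \<xi> [1..<k]) * \<xi> k) = w i * (\<Sum>k=1..n. Pc (w i) (map \<xi> [1..<k]) * \<xi> k)"
        by (simp only: sum_distrib_left mult.assoc)
      also have "\<dots> = w i * (Kc (w i) \<xi> n - 1)" by (simp only: Kc_telescope)
      finally show ?thesis by (simp add: right_diff_distrib)
    qed
  qed
  also have "\<dots> = Kmix \<xi> n - 1"
    using suminf_diff[OF sK sw(1)] sw(2) unfolding Kmix_def w_def by simp
  finally show ?thesis by simp
qed

lemma Kmix_ge: assumes "\<xi> \<in> Omega"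
  shows "(1/2::real) ^ Suc i * Kc ((1/2) ^ Suc i) \<xi> n \<le> Kmix \<xi> n"
proof -
  have nn: "0 \<le> (1/2::real) ^ Suc j * Kc ((1/2) ^ Suc j) \<xi> n" for j
    using Kc_bounds[OF assms, of "(1/2) ^ Suc j" n] w_bounds[of j] by auto
  have "sum (\<lambda>j. (1/2::real) ^ Suc j * Kc ((1/2) ^ Suc j) \<xi> n) {i} \<le> Kmix \<xi> n"
    unfolding Kmix_def
    apply (rule sum_le_suminf[OF summable_Kmix[OF assms]])
     apply simp
    apply (rule nn)
    done
  thus ?thesis by simp
qed

lemma Kmix_nonneg: assumes "\<xi> \<in> Omega" shows "0 \<le> Kmix \<xi> n"
  using Kmix_ge[OF assms, of 0 n] Kc_bounds[OF assms, of "1/2" n] by simp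

lemma alg:
  fixes S x m c a :: real
  assumes m: "m > 0" and x: "x^2 = 1" and P: "S^2/m \<le> a" and P': "(S+x)^2/(m+1) \<le> a"
    and c: "0 \<le> c" "c \<le> (1-a)/8" and a: "0 \<le> a" "a \<le> 1"
  shows "(-c*S*x/m) - 2*(-c*S*x/m)^2 \<ge> c/2 * (S^2/m - (S+x)^2/(m+1)) + c*(1-a)/4/m"
proof -
  have sq: "(S+x)^2 = S^2 + 2*S*x + 1" using x by (simp add: power2_eq_square algebra_simps)
  have e1: "-c*S*x/m = c/2 * (S^2/m - (S+x)^2/(m+1)) + c/2*(1 - (S+x)^2/(m+1))/m"
  proof -
    have gen: "c/2 * (S^2/m - T/(m+1)) + c/2*(1 - T/(m+1))/m = c/2*(S^2 + 1 - T)/m" for T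
    proof -
      define q where "q = T/(m+1)"
      have T: "T = q*(m+1)" using m by (simp add: q_def)
      have "c/2 * (S^2/m - q) + c/2*(1 - q)/m = c/2*(S^2 + 1 - q*(m+1))/m"
        using m by (simp add: field_simps)
      thus ?thesis unfolding q_def[symmetric] using T by simp
    qed
    show ?thesis unfolding gen sq by (simp add: field_simps)
  qed
  have e2: "(-c*S*x/m)^2 = c^2 * (S^2/m) / m"
    using m x by (simp add: power_mult_distrib power_divide power2_eq_square field_simps)
  have b1: "c/2*(1-a)/m \<le> c/2*(1 - (S+x)^2/(m+1))/m"
    using m c P' by (intro divide_right_mono mult_left_mono) auto
  have "c^2 * (S^2/m) \<le> c^2 * a" using P by (intro mult_left_mono) auto
  also have "c^2 * a = c * (c * a)" by (simp add: power2_eq_square)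
  also have "\<dots> \<le> c * c" using c a by (intro mult_left_mono) (auto simp: mult_left_le)
  also have "\<dots> \<le> c * ((1-a)/8)" using c by (intro mult_left_mono) auto
  finally have X: "c^2 * (S^2/m) \<le> c*((1-a)/8)" .
  have X2: "c^2 * (S^2/m) / m \<le> c*((1-a)/8) / m" using m by (intro divide_right_mono[OF X]) simp
  have "2 * (c*((1-a)/8) / m) = c*(1-a)/4/m" by simp
  hence b2: "2 * (c^2 * (S^2/m) / m) \<le> c*(1-a)/4/m" using X2 by linarith
  have "c/2*(1-a)/m - c*(1-a)/4/m = c*(1-a)/4/m" by (simp add: field_simps)
  thus ?thesis unfolding e2 using e1 b1 b2 by linarith
qed

lemma Kc_diverges:
  assumes xi: "\<xi> \<in> Omega" and N: "N \<ge> 1" and a: "0 \<le> a" "a < 1"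
    and Phi: "\<And>n. n \<ge> N \<Longrightarrow> (\<Sum>k=1..n. \<xi> k)^2 / real n \<le> a"
    and c: "0 < c" "c \<le> (1 - a)/8"
  shows "filterlim (Kc c \<xi>) at_top sequentially"
proof -
  define S where "S n = (\<Sum>k=1..n. \<xi> k)" for n
  define \<delta> where "\<delta> = c*(1-a)/4"
  define G where "G m = ln (Kc c \<xi> m) + c/2 * (S m ^2 / real m) - \<delta> * ln (real m)" for m
  have c2: "c \<le> 1/2" using c a by simp
  have dpos: "\<delta> > 0" using c a by (simp add: \<delta>_def)
  have Kpos: "0 < Kc c \<xi> n" for n using Kc_bounds[OF xi, of c n] c c2 by auto
  have Gstep: "G m \<le> G (Suc m)" if m: "m \<ge> N" for m
  proof -
    have m0: "real m > 0" using m N by simp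
    define x where "x = \<xi> (Suc m)"
    have x2: "x^2 = 1" using Omega_sq[OF xi, of "Suc m"] by (simp add: x_def)
    have xa: "\<bar>x\<bar> = 1" using Omega_abs[OF xi, of "Suc m"] by (simp add: x_def)
    have SSuc: "S (Suc m) = S m + x" by (simp add: S_def x_def)
    define u where "u = -c * S m * x / real m"
    have ueq: "u = - (c * xbar \<xi> m * \<xi> (Suc m))"
      by (simp add: u_def xbar_def S_def x_def)
    have fac: "1 - c * xbar \<xi> m * \<xi> (Suc m) = 1 + u" using ueq by simp
    have fpos: "0 < 1 + u" using factor_bounds(1)[OF xi, of c m] c c2 fac by linarith
    have lnK: "ln (Kc c \<xi> (Suc m)) = ln (Kc c \<xi> m) + ln (1 + u)"
      using Kpos[of m] fpos by (simp add: Kc_Suc fac ln_mult)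
    have "\<bar>u\<bar> = c * \<bar>xbar \<xi> m\<bar>" using ueq xa c by (simp add: abs_mult x_def)
    also have "\<dots> \<le> c" using xbar_abs[OF xi] c by (simp add: mult_left_le)
    finally have uabs: "\<bar>u\<bar> \<le> 1/2" using c2 by linarith
    have lnb: "u - 2*u^2 \<le> ln (1 + u)"
      using abs_ln_one_plus_x_minus_x_bound[OF uabs] by (simp add: abs_le_iff)
    have P1: "S m ^2 / real m \<le> a" using Phi[OF m] by (simp add: S_def)
    have P2: "(S m + x)^2 / (real m + 1) \<le> a"
      using Phi[of "Suc m"] m SSuc by (simp add: S_def add.commute)
    have al: "u - 2*u^2 \<ge> c/2 * (S m^2/real m - (S m + x)^2/(real m + 1)) + c*(1-a)/4/real m"
      unfolding u_def using alg[OF m0 x2 P1 P2 _ c(2) a(1)] c a by simp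
    have "ln (real (Suc m)) - ln (real m) = ln ((real m + 1) / real m)"
      using m0 by (simp add: ln_div)
    also have "\<dots> \<le> (real m + 1) / real m - 1" using m0 by (intro ln_le_minus_one) simp
    also have "\<dots> = 1 / real m" using m0 by (simp add: field_simps)
    finally have "\<delta> * (ln (real (Suc m)) - ln (real m)) \<le> \<delta> * (1 / real m)"
      using dpos by (intro mult_left_mono) auto
    hence lnd: "\<delta> * ln (real (Suc m)) - \<delta> * ln (real m) \<le> c*(1-a)/4/real m"
      by (simp add: \<delta>_def right_diff_distrib)
    have "S (Suc m)^2 / real (Suc m) = (S m + x)^2/(real m + 1)" by (simp add: SSuc add.commute)
    thus ?thesis unfolding G_def using lnK lnb al lnd by (simp add: algebra_simps) 
  qed
  have mono: "G N \<le> G n" if "n \<ge> N" for n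
    using that
  proof (induction n rule: dec_induct)
    case base thus ?case by simp
  next
    case (step n) thus ?case using Gstep[of n] by simp
  qed
  have low: "G N - c/2*a + \<delta> * ln (real n) \<le> ln (Kc c \<xi> n)" if n: "n \<ge> N" for n
  proof -
    have "c/2 * (S n ^2 / real n) \<le> c/2 * a" using Phi[OF n] c by (intro mult_left_mono) (auto simp: S_def)
    thus ?thesis using mono[OF n] unfolding G_def by simp
  qed
  have "filterlim (\<lambda>n. (G N - c/2*a) + \<delta> * ln (real n)) at_top sequentially"
    by (intro filterlim_tendsto_add_at_top[OF tendsto_const] filterlim_tendsto_pos_mult_at_top[OF tendsto_const dpos]
        filterlim_compose[OF ln_at_top filterlim_real_sequentially])
  hence "filterlim (\<lambda>n. ln (Kc c \<xi> n)) at_top sequentially"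
    by (rule filterlim_at_top_mono) (use low in \<open>auto simp: eventually_sequentially\<close>)
  hence "filterlim (\<lambda>n. exp (ln (Kc c \<xi> n))) at_top sequentially"
    by (rule filterlim_compose[OF exp_at_top])
  thus ?thesis using Kpos by simp
qed


lemma Kmix_diverges:
  assumes xi: "\<xi> \<in> Omega" and nE: "\<xi> \<notin> E1"
  shows "filterlim (Kmix \<xi>) at_top sequentially"
proof -
  define f where "f n = ereal (sqrt (real n) * \<bar>xbar \<xi> n\<bar>)" for n
  have "\<not> limsup f \<ge> 1" using nE xi unfolding E1_def f_def by auto
  hence "limsup f < 1" by simp
  then obtain b where b: "limsup f < ereal b" "ereal b < 1" using ereal_dense2 by blast
  have "eventually (\<lambda>n. f n < ereal b) sequentially" by (rule Limsup_lessD[OF b(1)])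
  then obtain N0 where N0: "\<And>n. n \<ge> N0 \<Longrightarrow> sqrt (real n) * \<bar>xbar \<xi> n\<bar> < b"
    unfolding eventually_sequentially f_def by auto
  define N where "N = max N0 1"
  have N1: "N \<ge> 1" by (simp add: N_def)
  have "0 \<le> sqrt (real N0) * \<bar>xbar \<xi> N0\<bar>" by simp
  hence b0: "0 < b" using N0[of N0] by linarith
  have b1: "b < 1" using b(2) by simp
  define a where "a = b^2"
  have "b^2 < 1^2" using b0 b1 by (intro power_strict_mono) auto
  hence a: "0 \<le> a" "a < 1" by (auto simp: a_def)
  have Phi: "(\<Sum>k=1..n. \<xi> k)^2 / real n \<le> a" if n: "n \<ge> N" for n
  proof -
    have n0: "real n > 0" using n N1 by simp
    have "(sqrt (real n) * \<bar>xbar \<xi> n\<bar>)^2 = (\<Sum>k=1..n. \<xi> k)^2 / real n"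
      using n0 by (simp add: power_mult_distrib xbar_def power_divide) (simp add: power2_eq_square)
    moreover have "(sqrt (real n) * \<bar>xbar \<xi> n\<bar>)^2 \<le> b^2"
      using N0[of n] n by (intro power_mono) (auto simp: N_def)
    ultimately show ?thesis by (simp add: a_def)
  qed
  obtain k where k: "(1/2::real)^k < (1 - a)/8" using real_arch_pow_inv[of "(1-a)/8" "1/2"] a by auto
  define c where "c = (1/2::real)^Suc k"
  have "0 \<le> (1/2::real)^k" by simp
  moreover have "c = (1/2::real)^k / 2" by (simp add: c_def)
  ultimately have c: "0 < c" "c \<le> (1-a)/8" using k by (simp add: c_def, linarith)
  have "filterlim (Kc c \<xi>) at_top sequentially" by (rule Kc_diverges[OF xi N1 a Phi c])
  hence "filterlim (\<lambda>n. c * Kc c \<xi> n) at_top sequentially"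
    by (intro filterlim_tendsto_pos_mult_at_top[OF tendsto_const c(1)])
  thus ?thesis
    by (rule filterlim_at_top_mono) (use Kmix_ge[OF xi, of k] in \<open>auto simp: c_def\<close>)
qed

theorem theorem1:
  shows "(\<forall>\<xi>\<in>Omega. \<forall>n. Kmix \<xi> n = 1 + capital Q \<xi> n)
       \<and> (\<forall>\<xi>\<in>Omega. \<forall>n. Kmix \<xi> n \<ge> 0)
       \<and> (\<forall>\<xi>\<in>Omega. \<xi> \<notin> E1 \<longrightarrow> filterlim (Kmix \<xi>) at_top sequentially)
       \<and> forces Q E1"
proof (intro conjI)
  show A: "\<forall>\<xi>\<in>Omega. \<forall>n. Kmix \<xi> n = 1 + capital Q \<xi> n" using main_identity by blast
  show "\<forall>\<xi>\<in>Omega. \<forall>n. Kmix \<xi> n \<ge> 0" using Kmix_nonneg by blast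
  show B: "\<forall>\<xi>\<in>Omega. \<xi> \<notin> E1 \<longrightarrow> filterlim (Kmix \<xi>) at_top sequentially"
    using Kmix_diverges by blast
  show "forces Q E1"
    unfolding forces_def
  proof (intro conjI ballI allI impI)
    fix \<xi> n assume xi: "\<xi> \<in> Omega"
    show "capital Q \<xi> n \<ge> -1" using main_identity[OF xi, of n] Kmix_nonneg[OF xi, of n] by simp
  next
    fix \<xi> assume xi: "\<xi> \<in> Omega" and nE: "\<xi> \<notin> E1"
    have "filterlim (\<lambda>n. (-1) + Kmix \<xi> n) at_top sequentially"
      by (rule filterlim_tendsto_add_at_top[OF tendsto_const Kmix_diverges[OF xi nE]])
    moreover have "(\<lambda>n. (-1) + Kmix \<xi> n) = capital Q \<xi>"
      using main_identity[OF xi] by (auto simp: fun_eq_iff)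
    ultimately show "filterlim (capital Q \<xi>) at_top sequentially" by simp
  qed
qed

end
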